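(* The bracket induced on $\mathbf T_{m+1}$ by ${\rm PB}_1({\rm R};\mathcal F)$ is given, for $1\le i,j\le m$ and all $k$, by $\{b_k,b_{k+1}\}_1=\alpha a_k^{(1)}$; $\{b_k,a_k^{(j)}\}_1=-a_k^{(j)}$, $\{a_k^{(j)},b_{k+j}\}_1=-a_k^{(j)}$; $\{b_k,a_{k+1}^{(j)}\}_1=\alpha a_k^{(j+1)}$, $\{a_k^{(j)},b_{k+j+1}\}_1=\alpha a_k^{(j+1)}$; $\{a_k^{(i)},a_{k+i}^{(j)}\}_1=-a_k^{(i+j)}$; $\{a_k^{(i)},a_{k+i+1}^{(j)}\}_1=\alpha a_k^{(i+j+1)}$; all other brackets between coordinates (except those obtained by antisymmetry) vanish. (Here $N\ge2m+2$.)
   Context: Periodic lattice setting: $N\ge2$, $m\ge1$; $\mathfrak g=\{X(\lambda)\in gl(N)[\lambda,\lambda^{-1}]:\Omega X(\lambda)\Omega^{-1}=X(\omega\lambda)\}$, $\omega=e^{2\pi i/N}$, $\Omega=\mathrm{diag}(1,\omega,\dots,\omega^{N-1})$, matrix indices and lattice subscripts modulo $N$; $\langle X,Y\rangle$ = coefficient of $\lambda^0$ in $\mathrm{tr}(XY)$; $\pi_+,\pi_-$ projections onto nonnegative, resp. negative, powers of $\lambda$ (graded pieces $\mathfrak g_p=\{\lambda^p\sum_{j-k\equiv p}x_{jk}E_{jk}\}$); ${\rm R}=\pi_+-\pi_-$. Gradient: $\langle\nabla\varphi(L),M\rangle=\frac{d}{d\varepsilon}\varphi(L+\varepsilon M)|_{\varepsilon=0}$.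 $\alpha$ real; $\mathcal E=\lambda\sum_kE_{k+1,k}$; $\mathcal F=I-\alpha\mathcal E$. $[X,Y]^{(\mathcal F)}=X\mathcal FY-Y\mathcal FX$; ${\rm PB}_1({\rm R};\mathcal F)$: $\{\varphi,\psi\}_1(L)=\frac12\langle[{\rm R}\nabla\varphi,\nabla\psi]^{(\mathcal F)}+[\nabla\varphi,{\rm R}\nabla\psi]^{(\mathcal F)},L\rangle$. $\mathbf T_{m+1}$ (a Poisson submanifold for this bracket) = set of $T=\mathcal E+\sum_kb_kE_{kk}+\sum_{j=1}^m\lambda^{-j}\sum_ka_k^{(j)}E_{k,k+j}$; coordinates $b_k(X)$ = coefficient of $\lambda^0E_{kk}$, $a_k^{(j)}(X)$ = coefficient of $\lambda^{-j}E_{k,k+j}$; convention $a_k^{(i)}=0$ for $i>m$. *)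

theory Defs
  imports "HOL-Analysis.Analysis"
begin

text \<open>An element X of gl(N)[lambda, lambda^-1] is represented by its coefficient
function: X p r s = coefficient of lambda^p in the (r,s) matrix entry,
matrix indices r, s in {0..<N} (indices are taken modulo N).\<close>

type_synonym loopmat = "int \<Rightarrow> nat \<Rightarrow> nat \<Rightarrow> complex"

definition lsupp :: "loopmat \<Rightarrow> int set" where
  "lsupp X = {p. \<exists>r s. X p r s \<noteq> 0}"

text \<open>The twisted loop algebra g: Omega X(lambda) Omega^-1 = X(omega lambda) means
that the coefficient of lambda^p in entry (r,s) vanishes unless r - s = p (mod N).\<close>
definition gset :: "nat \<Rightarrow> loopmat set" where
  "gset N = {X. finite (lsupp X) \<and> (\<forall>p r s. (N \<le> r \<or> N \<le> s) \<longrightarrow> X p r s = 0)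
      \<and> (\<forall>p r s. X p r s \<noteq> 0 \<longrightarrow> (int r - int s - p) mod int N = 0)}"

definition ladd :: "loopmat \<Rightarrow> loopmat \<Rightarrow> loopmat" where
  "ladd X Y = (\<lambda>p r s. X p r s + Y p r s)"

definition lsub :: "loopmat \<Rightarrow> loopmat \<Rightarrow> loopmat" where
  "lsub X Y = (\<lambda>p r s. X p r s - Y p r s)"

definition lscale :: "complex \<Rightarrow> loopmat \<Rightarrow> loopmat" where
  "lscale c X = (\<lambda>p r s. c * X p r s)"

definition lmul :: "nat \<Rightarrow> loopmat \<Rightarrow> loopmat \<Rightarrow> loopmat" where
  "lmul N X Y = (\<lambda>p r s. \<Sum>q\<in>lsupp X. \<Sum>l<N. X q r l * Y (p - q) l s)"

definition pairing :: "nat \<Rightarrow> loopmat \<Rightarrow> loopmat \<Rightarrow> complex" where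
  "pairing N X Y = (\<Sum>r<N. lmul N X Y 0 r r)"

definition Rop :: "loopmat \<Rightarrow> loopmat" where
  "Rop X = (\<lambda>p r s. if 0 \<le> p then X p r s else - X p r s)"

definition Emat :: "nat \<Rightarrow> loopmat" where
  "Emat N = (\<lambda>p r s. if p = 1 \<and> r < N \<and> s < N \<and> r = Suc s mod N then 1 else 0)"

definition Imat :: "nat \<Rightarrow> loopmat" where
  "Imat N = (\<lambda>p r s. if p = 0 \<and> r < N \<and> r = s then 1 else 0)"

definition Fmat :: "nat \<Rightarrow> real \<Rightarrow> loopmat" where
  "Fmat N \<alpha> = lsub (Imat N) (lscale (complex_of_real \<alpha>) (Emat N))"

definition brF :: "nat \<Rightarrow> real \<Rightarrow> loopmat \<Rightarrow> loopmat \<Rightarrow> loopmat" where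
  "brF N \<alpha> X Y = lsub (lmul N (lmul N X (Fmat N \<alpha>)) Y) (lmul N (lmul N Y (Fmat N \<alpha>)) X)"

definition grad :: "nat \<Rightarrow> (loopmat \<Rightarrow> complex) \<Rightarrow> loopmat \<Rightarrow> loopmat" where
  "grad N \<phi> L = (THE X. X \<in> gset N \<and>
      (\<forall>M\<in>gset N. pairing N X M = deriv (\<lambda>\<epsilon>. \<phi> (ladd L (lscale \<epsilon> M))) 0))"

definition PB1 :: "nat \<Rightarrow> real \<Rightarrow> (loopmat \<Rightarrow> complex) \<Rightarrow> (loopmat \<Rightarrow> complex) \<Rightarrow> loopmat \<Rightarrow> complex" where
  "PB1 N \<alpha> \<phi> \<psi> L = 1/2 * pairing N
      (ladd (brF N \<alpha> (Rop (grad N \<phi> L)) (grad N \<psi> L))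
            (brF N \<alpha> (grad N \<phi> L) (Rop (grad N \<psi> L)))) L"

text \<open>Points of T_{m+1}: b r = b_r, a j r = a_r^(j).\<close>
definition Tmat :: "nat \<Rightarrow> nat \<Rightarrow> (nat \<Rightarrow> complex) \<Rightarrow> (nat \<Rightarrow> nat \<Rightarrow> complex) \<Rightarrow> loopmat" where
  "Tmat N m b a = (\<lambda>p r s.
     if r < N \<and> s < N then
       (if p = 1 then (if r = Suc s mod N then 1 else 0)
        else if p = 0 then (if r = s then b r else 0)
        else if - int m \<le> p \<and> p < 0 then
          (if s = (r + nat (- p)) mod N then a (nat (- p)) r else 0)
        else 0)
     else 0)"

definition Tset :: "nat \<Rightarrow> nat \<Rightarrow> loopmat set" where
  "Tset N m = {Tmat N m b a | b a. True}"

definition bco :: "nat \<Rightarrow> nat \<Rightarrow> loopmat \<Rightarrow> complex" where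
  "bco N k X = X 0 (k mod N) (k mod N)"

definition aco :: "nat \<Rightarrow> nat \<Rightarrow> nat \<Rightarrow> loopmat \<Rightarrow> complex" where
  "aco N j k X = X (- int j) (k mod N) ((k + j) mod N)"

datatype coord = Bc nat | Ac nat nat  \<comment> \<open>Bc k = b_k, Ac j k = a_k^(j)\<close>

fun coordfun :: "nat \<Rightarrow> coord \<Rightarrow> loopmat \<Rightarrow> complex" where
  "coordfun N (Bc k) = bco N k"
| "coordfun N (Ac j k) = aco N j k"

fun valid_coord :: "nat \<Rightarrow> coord \<Rightarrow> bool" where
  "valid_coord m (Bc k) = True"
| "valid_coord m (Ac j k) = (1 \<le> j \<and> j \<le> m)"

text \<open>Ordered pairs of coordinates for which the theorem lists a bracket.\<close>
fun listed :: "nat \<Rightarrow> coord \<Rightarrow> coord \<Rightarrow> bool" where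
  "listed N (Bc k) (Bc l) = (l mod N = (k + 1) mod N)"
| "listed N (Bc k) (Ac j l) = (l mod N = k mod N \<or> l mod N = (k + 1) mod N)"
| "listed N (Ac j k) (Bc l) = (l mod N = (k + j) mod N \<or> l mod N = (k + j + 1) mod N)"
| "listed N (Ac i k) (Ac j l) = (l mod N = (k + i) mod N \<or> l mod N = (k + i + 1) mod N)"

end

theory Submission
  imports Defs
begin


definition dm :: "int \<Rightarrow> nat \<Rightarrow> nat \<Rightarrow> loopmat" where
  "dm p a b = (\<lambda>n r s. if n = p \<and> r = a \<and> s = b then 1 else 0)"

lemma lsupp_dm: "lsupp (dm p a b) \<subseteq> {p}"
  unfolding lsupp_def dm_def by auto

lemma lsupp_lsub: "lsupp (lsub A B) \<subseteq> lsupp A \<union> lsupp B"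
  unfolding lsupp_def lsub_def by (auto simp: subset_iff) (metis diff_self)
lemma lsupp_ladd: "lsupp (ladd A B) \<subseteq> lsupp A \<union> lsupp B"
  unfolding lsupp_def ladd_def by (auto simp: subset_iff) (metis add_0)
lemma lsupp_lscale: "lsupp (lscale c A) \<subseteq> lsupp A"
  unfolding lsupp_def lscale_def by auto

lemma fin_dm: "finite (lsupp (dm p a b))"
  by (rule finite_subset[OF lsupp_dm]) simp
lemma fin_lsub: "finite (lsupp A) \<Longrightarrow> finite (lsupp B) \<Longrightarrow> finite (lsupp (lsub A B))"
  by (rule finite_subset[OF lsupp_lsub]) simp
lemma fin_ladd: "finite (lsupp A) \<Longrightarrow> finite (lsupp B) \<Longrightarrow> finite (lsupp (ladd A B))"
  by (rule finite_subset[OF lsupp_ladd]) simp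
lemma fin_lscale: "finite (lsupp A) \<Longrightarrow> finite (lsupp (lscale c A))"
  by (rule finite_subset[OF lsupp_lscale])

lemma sum_single:
  assumes "finite A" "a \<in> A" "\<And>x. x \<in> A \<Longrightarrow> x \<noteq> a \<Longrightarrow> f x = 0" "f a = c"
  shows "sum f A = c"
proof -
  have "sum f A = f a + sum f (A - {a})" using assms(1,2) by (simp add: sum.remove)
  also have "sum f (A - {a}) = 0" using assms(3) by (intro sum.neutral) auto
  finally show ?thesis using assms(4) by simp
qed

lemma lmul_superset:
  assumes "finite S" "lsupp X \<subseteq> S"
  shows "lmul N X Y n a b = (\<Sum>q\<in>S. \<Sum>l<N. X q a l * Y (n - q) l b)"
proof -
  have "(\<Sum>q\<in>lsupp X. \<Sum>l<N. X q a l * Y (n - q) l b) = (\<Sum>q\<in>S. \<Sum>l<N. X q a l * Y (n - q) l b)"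
  proof (rule sum.mono_neutral_left[OF assms(1) assms(2)])
    show "\<forall>i\<in>S - lsupp X. (\<Sum>l<N. X i a l * Y (n - i) l b) = 0"
    proof
      fix i assume "i \<in> S - lsupp X"
      then have "\<forall>r s. X i r s = 0" by (simp add: lsupp_def)
      then show "(\<Sum>l<N. X i a l * Y (n - i) l b) = 0" by simp
    qed
  qed
  then show ?thesis unfolding lmul_def .
qed

lemma lmul_dm: "b < N \<Longrightarrow> lmul N (dm p a b) Y = (\<lambda>n r s. if r = a then Y (n - p) b s else 0)"
proof (rule ext)+
  fix n r s assume "b < N"
  have "lmul N (dm p a b) Y n r s = (\<Sum>q\<in>{p}. \<Sum>l<N. dm p a b q r l * Y (n - q) l s)"
    by (rule lmul_superset) (auto simp: lsupp_dm)
  also have "\<dots> = (if r = a then Y (n - p) b s else 0)"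
  proof (cases "r = a")
    case True
    then show ?thesis using \<open>b < N\<close>
      by (simp, intro sum_single[where a=b]) (auto simp: dm_def)
  qed (simp add: dm_def)
  finally show "lmul N (dm p a b) Y n r s = (if r = a then Y (n - p) b s else 0)" .
qed

lemma lmul_lsub: "finite (lsupp A) \<Longrightarrow> finite (lsupp B) \<Longrightarrow>
   lmul N (lsub A B) Y = lsub (lmul N A Y) (lmul N B Y)"
proof (rule ext)+
  fix n r s assume f: "finite (lsupp A)" "finite (lsupp B)"
  let ?S = "lsupp A \<union> lsupp B"
  have "lmul N (lsub A B) Y n r s = (\<Sum>q\<in>?S. \<Sum>l<N. lsub A B q r l * Y (n - q) l s)"
    by (rule lmul_superset) (use f lsupp_lsub in auto)
  moreover have "lmul N A Y n r s = (\<Sum>q\<in>?S. \<Sum>l<N. A q r l * Y (n - q) l s)"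
    by (rule lmul_superset) (use f in auto)
  moreover have "lmul N B Y n r s = (\<Sum>q\<in>?S. \<Sum>l<N. B q r l * Y (n - q) l s)"
    by (rule lmul_superset) (use f in auto)
  ultimately show "lmul N (lsub A B) Y n r s = lsub (lmul N A Y) (lmul N B Y) n r s"
    by (simp add: lsub_def left_diff_distrib sum_subtractf)
qed

lemma lmul_ladd: "finite (lsupp A) \<Longrightarrow> finite (lsupp B) \<Longrightarrow>
   lmul N (ladd A B) Y = ladd (lmul N A Y) (lmul N B Y)"
proof (rule ext)+
  fix n r s assume f: "finite (lsupp A)" "finite (lsupp B)"
  let ?S = "lsupp A \<union> lsupp B"
  have "lmul N (ladd A B) Y n r s = (\<Sum>q\<in>?S. \<Sum>l<N. ladd A B q r l * Y (n - q) l s)"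
    by (rule lmul_superset) (use f lsupp_ladd in auto)
  moreover have "lmul N A Y n r s = (\<Sum>q\<in>?S. \<Sum>l<N. A q r l * Y (n - q) l s)"
    by (rule lmul_superset) (use f in auto)
  moreover have "lmul N B Y n r s = (\<Sum>q\<in>?S. \<Sum>l<N. B q r l * Y (n - q) l s)"
    by (rule lmul_superset) (use f in auto)
  ultimately show "lmul N (ladd A B) Y n r s = ladd (lmul N A Y) (lmul N B Y) n r s"
    by (simp add: ladd_def distrib_right sum.distrib)
qed

lemma lmul_lscale: "finite (lsupp A) \<Longrightarrow> lmul N (lscale c A) Y = lscale c (lmul N A Y)"
proof (rule ext)+
  fix n r s assume f: "finite (lsupp A)"
  have "lmul N (lscale c A) Y n r s = (\<Sum>q\<in>lsupp A. \<Sum>l<N. lscale c A q r l * Y (n - q) l s)"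
    by (rule lmul_superset) (use f lsupp_lscale in auto)
  then show "lmul N (lscale c A) Y n r s = lscale c (lmul N A Y) n r s"
    by (simp add: lscale_def lmul_def sum_distrib_left mult.assoc)
qed

lemma pairing_lsub: "finite (lsupp A) \<Longrightarrow> finite (lsupp B) \<Longrightarrow>
  pairing N (lsub A B) L = pairing N A L - pairing N B L"
  unfolding pairing_def by (subst lmul_lsub) (auto simp: lsub_def sum_subtractf)
lemma pairing_ladd: "finite (lsupp A) \<Longrightarrow> finite (lsupp B) \<Longrightarrow>
  pairing N (ladd A B) L = pairing N A L + pairing N B L"
  unfolding pairing_def by (subst lmul_ladd) (auto simp: ladd_def sum.distrib)
lemma pairing_lscale: "finite (lsupp A) \<Longrightarrow>
  pairing N (lscale c A) L = c * pairing N A L"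
  unfolding pairing_def by (subst lmul_lscale) (auto simp: lscale_def sum_distrib_left)

lemma pairing_dm: "a < N \<Longrightarrow> b < N \<Longrightarrow> pairing N (dm p a b) M = M (-p) b a"
  by (simp add: pairing_def lmul_dm)

lemma pairing_dm_right:
  assumes "finite (lsupp X)" "a < N" "b < N"
  shows "pairing N X (dm p a b) = X (-p) b a"
proof -
  let ?S = "insert (-p) (lsupp X)"
  have "pairing N X (dm p a b) = (\<Sum>r<N. \<Sum>q\<in>?S. \<Sum>l<N. X q r l * dm p a b (0 - q) l r)"
    unfolding pairing_def by (subst lmul_superset[where S="?S"]) (use assms in auto)
  also have "\<dots> = X (-p) b a"
  proof (rule sum_single[where a=b])
    show "(\<Sum>q\<in>?S. \<Sum>l<N. X q r l * dm p a b (0 - q) l r) = 0" if "r \<noteq> b" for r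
      using that by (simp add: dm_def)
    show "(\<Sum>q\<in>?S. \<Sum>l<N. X q b l * dm p a b (0 - q) l b) = X (- p) b a"
    proof (rule sum_single[where a="-p"])
      show "(\<Sum>l<N. X q b l * dm p a b (0 - q) l b) = 0" if "q \<noteq> -p" for q
        using that by (auto simp: dm_def)
      show "(\<Sum>l<N. X (-p) b l * dm p a b (0 - (-p)) l b) = X (- p) b a"
        by (rule sum_single[where a=a]) (use assms in \<open>auto simp: dm_def\<close>)
    qed (use assms in auto)
  qed (use assms in auto)
  finally show ?thesis .
qed


lemma pr_iff: "s < N \<Longrightarrow> (b < N \<and> s = Suc b mod N) = (b = (s + N - 1) mod N)"
proof (cases "s = 0")
  case True
  assume "s < N"
  then show ?thesis using True
    by (cases "Suc b = N") (auto simp: mod_if)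
next
  case False
  assume "s < N"
  then have e: "(s + N - 1) mod N = s - 1"
    using False by (simp add: mod_if)
  show ?thesis unfolding e using False \<open>s < N\<close>
    by (cases "Suc b = N") (auto simp: mod_if)
qed

lemma lmul_dm_F: "s < N \<Longrightarrow>
  lmul N (dm p r s) (Fmat N \<alpha>) = lsub (dm p r s) (lscale (complex_of_real \<alpha>) (dm (p+1) r ((s + N - 1) mod N)))"
proof (rule ext)+
  fix n a b assume sN: "s < N"
  have e: "(b < N \<and> s = Suc b mod N) = (b = (s + N - 1) mod N)" using pr_iff[OF sN] .
  show "lmul N (dm p r s) (Fmat N \<alpha>) n a b =
     lsub (dm p r s) (lscale (complex_of_real \<alpha>) (dm (p+1) r ((s + N - 1) mod N))) n a b"
    unfolding lmul_dm[OF sN] using sN e by (auto simp: Fmat_def lsub_def lscale_def Imat_def Emat_def dm_def)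
qed

lemma lmul_dm_dm: "s < N \<Longrightarrow>
  lmul N (dm p r s) (dm q u v) = lscale (if s = u then 1 else 0) (dm (p+q) r v)"
  by (rule ext)+ (simp only: lmul_dm, auto simp: dm_def lscale_def)

lemma XFY_eq: "s < N \<Longrightarrow> 0 < N \<Longrightarrow>
  lmul N (lmul N (dm p r s) (Fmat N \<alpha>)) (dm q u v) =
   lsub (lscale (if s = u then 1 else 0) (dm (p+q) r v))
        (lscale (complex_of_real \<alpha>) (lscale (if (s + N - 1) mod N = u then 1 else 0) (dm (p+1+q) r v)))"
  by (simp add: lmul_dm_F lmul_lsub lmul_lscale lmul_dm_dm fin_dm fin_lscale)

lemma pairing_brF_dm:
  assumes "r < N" "s < N" "u < N" "v < N"
  shows "pairing N (brF N \<alpha> (dm p r s) (dm q u v)) L =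
     (if s = u then 1 else 0) * L (-(p+q)) v r
     - complex_of_real \<alpha> * ((if (s + N - 1) mod N = u then 1 else 0) * L (-(p+1+q)) v r)
     - ((if v = r then 1 else 0) * L (-(q+p)) s u
     - complex_of_real \<alpha> * ((if (v + N - 1) mod N = r then 1 else 0) * L (-(q+1+p)) s u))"
proof -
  have N: "0 < N" using assms by auto
  show ?thesis unfolding brF_def using assms N
    by (simp add: XFY_eq pairing_lsub pairing_lscale pairing_dm fin_dm fin_lscale fin_lsub)
qed

lemma Rop_dm: "0 \<le> p \<Longrightarrow> Rop (dm p a b) = dm p a b"
  by (rule ext)+ (auto simp: Rop_def dm_def)

lemma fin_lmul_dm: "b < N \<Longrightarrow> finite (lsupp A) \<Longrightarrow> finite (lsupp (lmul N (dm p a b) A))"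
proof -
  assume "b < N" "finite (lsupp A)"
  have "lsupp (lmul N (dm p a b) A) \<subseteq> (\<lambda>x. x + p) ` lsupp A"
  proof
    fix n assume "n \<in> lsupp (lmul N (dm p a b) A)"
    then obtain r s where "lmul N (dm p a b) A n r s \<noteq> 0" unfolding lsupp_def by auto
    then have "A (n - p) b s \<noteq> 0" using \<open>b < N\<close> by (auto simp: lmul_dm split: if_splits)
    then have "n - p \<in> lsupp A" unfolding lsupp_def by auto
    then show "n \<in> (\<lambda>x. x + p) ` lsupp A" by (auto intro: image_eqI[where x="n - p"])
  qed
  then show ?thesis using \<open>finite (lsupp A)\<close> finite_subset by auto
qed

lemma PB1_dm:
  assumes "grad N \<phi> L = dm p r s" "grad N \<psi> L = dm q u v" "0 \<le> p" "0 \<le> q"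
    "r < N" "s < N" "u < N" "v < N"
  shows "PB1 N \<alpha> \<phi> \<psi> L = pairing N (brF N \<alpha> (dm p r s) (dm q u v)) L"
proof -
  have N: "0 < N" using assms by auto
  have f: "finite (lsupp (brF N \<alpha> (dm p r s) (dm q u v)))"
    unfolding brF_def using assms N
    by (simp add: XFY_eq fin_dm fin_lscale fin_lsub)
  show ?thesis unfolding PB1_def assms(1,2) Rop_dm[OF assms(3)] Rop_dm[OF assms(4)]
    using f by (simp add: pairing_ladd)
qed

lemma deriv_aff: "deriv (\<lambda>e::complex. c + e * d) z = d"
proof -
  have "((\<lambda>e::complex. c + e * d) has_field_derivative d) (at z)"
    by (auto intro!: derivative_eq_intros)
  then show ?thesis by (rule DERIV_imp_deriv)
qed

lemma dm_gset: "a < N \<Longrightarrow> b < N \<Longrightarrow> (int a - int b - p) mod int N = 0 \<Longrightarrow> dm p a b \<in> gset N"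
  unfolding gset_def using fin_dm by (auto simp: dm_def)

lemma grad_dm:
  assumes aN: "a < N" and bN: "b < N" and cg: "(int a - int b - p) mod int N = 0"
    and d: "\<And>M. deriv (\<lambda>e. \<phi> (ladd L (lscale e M))) 0 = M (-p) b a"
  shows "grad N \<phi> L = dm p a b"
  unfolding grad_def
proof (rule the_equality)
  show "dm p a b \<in> gset N \<and> (\<forall>M\<in>gset N. pairing N (dm p a b) M = deriv (\<lambda>e. \<phi> (ladd L (lscale e M))) 0)"
    using dm_gset[OF aN bN cg] by (simp add: pairing_dm aN bN d)
next
  fix X assume X: "X \<in> gset N \<and> (\<forall>M\<in>gset N. pairing N X M = deriv (\<lambda>e. \<phi> (ladd L (lscale e M))) 0)"
  then have Xg: "X \<in> gset N" and XP: "\<And>M. M \<in> gset N \<Longrightarrow> pairing N X M = M (-p) b a"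
    using d by auto
  have fX: "finite (lsupp X)" using Xg unfolding gset_def by auto
  show "X = dm p a b"
  proof (rule ext)+
    fix n x y
    show "X n x y = dm p a b n x y"
    proof (cases "x < N \<and> y < N")
      case False
      then show ?thesis using Xg aN bN unfolding gset_def dm_def by auto
    next
      case True
      show ?thesis
      proof (rule ccontr)
        assume ne: "X n x y \<noteq> dm p a b n x y"
        have c1: "(int x - int y - n) mod int N = 0"
        proof (cases "X n x y = 0")
          case True
          then have "dm p a b n x y \<noteq> 0" using ne by simp
          then have "n = p \<and> x = a \<and> y = b" unfolding dm_def by (auto split: if_splits)
          then show ?thesis using cg by simp
        next
          case False
          then show ?thesis using Xg unfolding gset_def by auto
        qed
        have "int N dvd (int x - int y - n)" using c1 by (simp add: dvd_eq_mod_eq_0)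
        then have "int N dvd - (int x - int y - n)" by (simp only: dvd_minus_iff)
        then have c2: "(int y - int x - (-n)) mod int N = 0"
          by (simp add: dvd_eq_mod_eq_0 algebra_simps)
        have Mg: "dm (-n) y x \<in> gset N" using dm_gset[OF _ _ c2] True by simp
        have "pairing N X (dm (-n) y x) = X n x y"
          using pairing_dm_right[OF fX, where a=y and b=x and p="-n"] True by simp
        moreover have "pairing N X (dm (-n) y x) = dm (-n) y x (-p) b a" using XP[OF Mg] .
        moreover have "dm (-n) y x (-p) b a = dm p a b n x y" unfolding dm_def by auto
        ultimately show False using ne by simp
      qed
    qed
  qed
qed

lemma grad_bco: "0 < N \<Longrightarrow> grad N (bco N k) L = dm 0 (k mod N) (k mod N)"
  by (rule grad_dm) (auto simp: bco_def ladd_def lscale_def deriv_aff)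

lemma grad_aco: "0 < N \<Longrightarrow> grad N (aco N j k) L = dm (int j) ((k + j) mod N) (k mod N)"
proof (rule grad_dm)
  assume N: "0 < N"
  have "int ((k + j) mod N) - int (k mod N) - int j
        = (int k div int N - (int k + int j) div int N) * int N"
    by (simp add: zmod_int zdiv_int minus_div_mult_eq_mod[symmetric] algebra_simps)
  then show "(int ((k + j) mod N) - int (k mod N) - int j) mod int N = 0" by (simp only: mod_mult_self1_is_0 mod_mult_self2_is_0)
qed (auto simp: aco_def ladd_def lscale_def deriv_aff)


lemma PBgen:
  assumes N: "0 < N" and g1: "grad N \<phi> L = dm p r s" and g2: "grad N \<psi> L = dm q u v"
    and "0 \<le> p" "0 \<le> q" "r < N" "s < N" "u < N" "v < N"
  shows "PB1 N \<alpha> \<phi> \<psi> L =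
     (if s = u then 1 else 0) * L (-(p+q)) v r
     - complex_of_real \<alpha> * ((if s = Suc u mod N then 1 else 0) * L (-(p+1+q)) v r)
     - ((if v = r then 1 else 0) * L (-(q+p)) s u
     - complex_of_real \<alpha> * ((if v = Suc r mod N then 1 else 0) * L (-(q+1+p)) s u))"
proof -
  have e1: "((s + N - 1) mod N = u) = (s = Suc u mod N)" using pr_iff[of s N u] assms by auto
  have e2: "((v + N - 1) mod N = r) = (v = Suc r mod N)" using pr_iff[of v N r] assms by auto
  show ?thesis
    unfolding PB1_dm[OF g1 g2 assms(4-9)] pairing_brF_dm[OF assms(6-9)] e1 e2 ..
qed

lemma ne_shift:
  fixes x y t N :: nat
  assumes "0 < t" "t < N" "y = x + t"
  shows "x mod N \<noteq> y mod N" "y mod N \<noteq> x mod N"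
proof -
  have "x mod N \<noteq> y mod N"
  proof
    assume "x mod N = y mod N"
    then have "N dvd (y - x)" using mod_eq_dvd_iff_nat[of x y N] assms by auto
    then have "N dvd t" using assms by simp
    then show False using assms nat_dvd_not_less by blast
  qed
  then show "x mod N \<noteq> y mod N" "y mod N \<noteq> x mod N" by auto
qed



lemma Tset_zero:
  assumes "L \<in> Tset N m" "m < n"
  shows "L (- int n) x y = 0"
  using assms unfolding Tset_def Tmat_def by auto

theorem mainTheorem7:
  fixes N m :: nat and \<alpha> :: real and L :: loopmat
  assumes "N \<ge> 2" and "m \<ge> 1" and "N \<ge> 2 * m + 2"
    and "L \<in> Tset N m"
  shows
   "(\<forall>k. PB1 N \<alpha> (bco N k) (bco N (k + 1)) L = complex_of_real \<alpha> * aco N 1 k L)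
  \<and> (\<forall>k j. 1 \<le> j \<and> j \<le> m \<longrightarrow> PB1 N \<alpha> (bco N k) (aco N j k) L = - aco N j k L)
  \<and> (\<forall>k j. 1 \<le> j \<and> j \<le> m \<longrightarrow> PB1 N \<alpha> (aco N j k) (bco N (k + j)) L = - aco N j k L)
  \<and> (\<forall>k j. 1 \<le> j \<and> j \<le> m \<longrightarrow>
        PB1 N \<alpha> (bco N k) (aco N j (k + 1)) L = complex_of_real \<alpha> * aco N (j + 1) k L)
  \<and> (\<forall>k j. 1 \<le> j \<and> j \<le> m \<longrightarrow>
        PB1 N \<alpha> (aco N j k) (bco N (k + j + 1)) L = complex_of_real \<alpha> * aco N (j + 1) k L)
  \<and> (\<forall>k i j. 1 \<le> i \<and> i \<le> m \<and> 1 \<le> j \<and> j \<le> m \<longrightarrow>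
        PB1 N \<alpha> (aco N i k) (aco N j (k + i)) L = - aco N (i + j) k L)
  \<and> (\<forall>k i j. 1 \<le> i \<and> i \<le> m \<and> 1 \<le> j \<and> j \<le> m \<longrightarrow>
        PB1 N \<alpha> (aco N i k) (aco N j (k + i + 1)) L = complex_of_real \<alpha> * aco N (i + j + 1) k L)
  \<and> (\<forall>c d. valid_coord m c \<and> valid_coord m d \<and> \<not> listed N c d \<and> \<not> listed N d c \<longrightarrow>
        PB1 N \<alpha> (coordfun N c) (coordfun N d) L = 0)"
proof -
  have N0: "0 < N" using assms by auto
  note gb = grad_bco[OF N0] and ga = grad_aco[OF N0]
  have P1: "\<forall>k. PB1 N \<alpha> (bco N k) (bco N (k + 1)) L = complex_of_real \<alpha> * aco N 1 k L"
  proof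
    fix k
    have c1: "k mod N \<noteq> Suc k mod N" "Suc k mod N \<noteq> k mod N"
      by (rule ne_shift[where t=1]; use assms in auto)+
    have c2: "k mod N \<noteq> Suc (Suc k) mod N" by (rule ne_shift[where t=2]) (use assms in auto)
    show "PB1 N \<alpha> (bco N k) (bco N (k + 1)) L = complex_of_real \<alpha> * aco N 1 k L"
      using N0 c1 c2 by (simp add: PBgen[OF N0 gb gb] aco_def mod_Suc_eq ac_simps)
  qed
  have P2: "\<forall>k j. 1 \<le> j \<and> j \<le> m \<longrightarrow> PB1 N \<alpha> (bco N k) (aco N j k) L = - aco N j k L"
  proof (intro allI impI)
    fix k j assume h: "1 \<le> j \<and> j \<le> m"
    have c1: "k mod N \<noteq> (k + j) mod N" by (rule ne_shift[where t="j"]) (use h assms in auto)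
    have c2: "k mod N \<noteq> Suc (k + j) mod N" by (rule ne_shift[where t="j+1"]) (use h assms in auto)
    have c3: "k mod N \<noteq> Suc k mod N" by (rule ne_shift[where t="1"]) (use h assms in auto)
    show "PB1 N \<alpha> (bco N k) (aco N j k) L = - aco N j k L"
      using N0 c1 c2 c3 by (simp add: PBgen[OF N0 gb ga] aco_def mod_Suc_eq ac_simps)
  qed
  have P3: "\<forall>k j. 1 \<le> j \<and> j \<le> m \<longrightarrow> PB1 N \<alpha> (aco N j k) (bco N (k + j)) L = - aco N j k L"
  proof (intro allI impI)
    fix k j assume h: "1 \<le> j \<and> j \<le> m"
    have c1: "k mod N \<noteq> (k + j) mod N" by (rule ne_shift[where t="j"]) (use h assms in auto)
    have c2: "k mod N \<noteq> Suc (k + j) mod N" by (rule ne_shift[where t="j+1"]) (use h assms in auto)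
    have c3: "(k + j) mod N \<noteq> Suc (k + j) mod N" by (rule ne_shift[where t="1"]) (use h assms in auto)
    show "PB1 N \<alpha> (aco N j k) (bco N (k + j)) L = - aco N j k L"
      using N0 c1 c2 c3 by (simp add: PBgen[OF N0 ga gb] aco_def mod_Suc_eq ac_simps)
  qed
  have P4: "\<forall>k j. 1 \<le> j \<and> j \<le> m \<longrightarrow>
        PB1 N \<alpha> (bco N k) (aco N j (k + 1)) L = complex_of_real \<alpha> * aco N (j + 1) k L"
  proof (intro allI impI)
    fix k j assume h: "1 \<le> j \<and> j \<le> m"
    have c1: "k mod N \<noteq> Suc (k + j) mod N" by (rule ne_shift[where t="j+1"]) (use h assms in auto)
    have c2: "k mod N \<noteq> Suc (Suc (k + j)) mod N" by (rule ne_shift[where t="j+2"]) (use h assms in auto)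
    have c3: "Suc k mod N \<noteq> k mod N" by (rule ne_shift[where t="1"]) (use h assms in auto)
    show "PB1 N \<alpha> (bco N k) (aco N j (k + 1)) L = complex_of_real \<alpha> * aco N (j + 1) k L"
      using N0 c1 c2 c3 by (simp add: PBgen[OF N0 gb ga] aco_def mod_Suc_eq ac_simps)
  qed
  have P5: "\<forall>k j. 1 \<le> j \<and> j \<le> m \<longrightarrow>
        PB1 N \<alpha> (aco N j k) (bco N (k + j + 1)) L = complex_of_real \<alpha> * aco N (j + 1) k L"
  proof (intro allI impI)
    fix k j assume h: "1 \<le> j \<and> j \<le> m"
    have c1: "k mod N \<noteq> Suc (k + j) mod N" by (rule ne_shift[where t="j+1"]) (use h assms in auto)
    have c2: "k mod N \<noteq> Suc (Suc (k + j)) mod N" by (rule ne_shift[where t="j+2"]) (use h assms in auto)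
    have c3: "Suc (k + j) mod N \<noteq> (k + j) mod N" by (rule ne_shift[where t="1"]) (use h assms in auto)
    show "PB1 N \<alpha> (aco N j k) (bco N (k + j + 1)) L = complex_of_real \<alpha> * aco N (j + 1) k L"
      using N0 c1 c2 c3 by (simp add: PBgen[OF N0 ga gb] aco_def mod_Suc_eq ac_simps)
  qed
  have P6: "\<forall>k i j. 1 \<le> i \<and> i \<le> m \<and> 1 \<le> j \<and> j \<le> m \<longrightarrow>
        PB1 N \<alpha> (aco N i k) (aco N j (k + i)) L = - aco N (i + j) k L"
  proof (intro allI impI)
    fix k i j assume h: "1 \<le> i \<and> i \<le> m \<and> 1 \<le> j \<and> j \<le> m"
    have c1: "k mod N \<noteq> (k + i + j) mod N" by (rule ne_shift[where t="i+j"]) (use h assms in auto)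
    have c2: "k mod N \<noteq> Suc (k + i + j) mod N" by (rule ne_shift[where t="i+j+1"]) (use h assms in auto)
    have c4: "(k + i) mod N \<noteq> Suc (k + i) mod N" by (rule ne_shift[where t="1"]) (use h assms in auto)
    show "PB1 N \<alpha> (aco N i k) (aco N j (k + i)) L = - aco N (i + j) k L"
      using N0 c1 c2 c4 by (simp add: PBgen[OF N0 ga ga] aco_def mod_Suc_eq ac_simps)
  qed
  have P7: "\<forall>k i j. 1 \<le> i \<and> i \<le> m \<and> 1 \<le> j \<and> j \<le> m \<longrightarrow>
        PB1 N \<alpha> (aco N i k) (aco N j (k + i + 1)) L = complex_of_real \<alpha> * aco N (i + j + 1) k L"
  proof (intro allI impI)
    fix k i j assume h: "1 \<le> i \<and> i \<le> m \<and> 1 \<le> j \<and> j \<le> m"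
    have c1: "k mod N \<noteq> Suc (k + i + j) mod N" by (rule ne_shift[where t="i+j+1"]) (use h assms in auto)
    have c3: "Suc (k + i) mod N \<noteq> (k + i) mod N" by (rule ne_shift[where t="1"]) (use h assms in auto)
    show "PB1 N \<alpha> (aco N i k) (aco N j (k + i + 1)) L = complex_of_real \<alpha> * aco N (i + j + 1) k L"
    proof (cases "i + j + 2 < N")
      case True
      have c2: "k mod N \<noteq> Suc (Suc (k + i + j)) mod N" by (rule ne_shift[where t="i+j+2"]) (use h True in auto)
      show ?thesis
        using N0 c1 c2 c3 by (simp add: PBgen[OF N0 ga ga] aco_def mod_Suc_eq ac_simps)
    next
      case False
      have z: "\<And>x y. L (- int (i + j + 1)) x y = 0"
        by (rule Tset_zero[OF assms(4)]) (use h False assms in auto)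
      show ?thesis
        using N0 c1 c3 z by (simp add: PBgen[OF N0 ga ga] aco_def mod_Suc_eq ac_simps)
    qed
  qed
  have P8: "\<forall>c d. valid_coord m c \<and> valid_coord m d \<and> \<not> listed N c d \<and> \<not> listed N d c \<longrightarrow>
        PB1 N \<alpha> (coordfun N c) (coordfun N d) L = 0"
  proof (intro allI impI)
    fix c d assume h: "valid_coord m c \<and> valid_coord m d \<and> \<not> listed N c d \<and> \<not> listed N d c"
    show "PB1 N \<alpha> (coordfun N c) (coordfun N d) L = 0"
    proof (cases c)
      case (Bc k)
      show ?thesis
      proof (cases d)
        case (Bc l)
        show ?thesis
        proof (cases "k mod N = l mod N")
          case True
          then show ?thesis using h N0 \<open>c = Bc k\<close> \<open>d = Bc l\<close>
            by (simp add: PBgen[OF N0 gb gb] mod_Suc_eq)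
        next
          case False
          then show ?thesis using h N0 \<open>c = Bc k\<close> \<open>d = Bc l\<close>
            by (simp add: PBgen[OF N0 gb gb] mod_Suc_eq)
        qed
      next
        case (Ac j l)
        then show ?thesis using h N0 \<open>c = Bc k\<close>
          by (simp add: PBgen[OF N0 gb ga] mod_Suc_eq)
      qed
    next
      case (Ac i k)
      show ?thesis
      proof (cases d)
        case (Bc l)
        then show ?thesis using h N0 \<open>c = Ac i k\<close>
          by (simp add: PBgen[OF N0 ga gb] mod_Suc_eq)
      next
        case (Ac j l)
        then show ?thesis using h N0 \<open>c = Ac i k\<close>
          by (simp add: PBgen[OF N0 ga ga] mod_Suc_eq)
      qed
    qed
  qed
  show ?thesis using P1 P2 P3 P4 P5 P6 P7 P8 by blast
qed

end
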